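(* Let $M$ be an object of an abelian category $\mathcal{A}$. Then: (1) $M$ is strongly self-Rickart if and only if $M$ is self-Rickart and weak duo. (2) $M$ is dual strongly self-Rickart if and only if $M$ is dual self-Rickart and weak duo.
   Context: A morphism $f:X\to Y$ is a section if $f'f=1_X$ for some $f'$, a retraction if $ff'=1_Y$ for some $f'$. A monomorphism $k:K\to M$ is fully invariant if for every $h:M\to M$ there is $\alpha:K\to K$ with $hk=k\alpha$; an epimorphism $c:M\to C$ is fully coinvariant if for every $h:M\to M$ there is $\gamma:C\to C$ with $ch=\gamma c$. $M$ is self-Rickart if the kernel of every endomorphism $f:M\to M$ is a section; dual self-Rickart if the cokernel of every endomorphism of $M$ is a retraction; strongly self-Rickart if the kernel of every endomorphism of $M$ is a fully invariant section; dual strongly self-Rickart if the cokernel of every endomorphism of $M$ is a fully coinvariant retraction (equivalently its image is a fully invariant section). $M$ is weak duo if every section $K\to M$ is fully invariant (equivalently every retraction $M\to C$ is fully coinvariant). *)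

theory Defs
  imports Main
begin

text \<open>A small, self-contained rendering of abelian categories.
  Arrows have type 'a, objects type 'o.  cmp C g f is the composite g after f.\<close>

record ('o, 'a) acat =
  Ob  :: "'o set"
  Ar  :: "'a set"
  src :: "'a \<Rightarrow> 'o"
  tgt :: "'a \<Rightarrow> 'o"
  cmp :: "'a \<Rightarrow> 'a \<Rightarrow> 'a"
  idt :: "'o \<Rightarrow> 'a"
  add :: "'a \<Rightarrow> 'a \<Rightarrow> 'a"
  neg :: "'a \<Rightarrow> 'a"
  zer :: "'o \<Rightarrow> 'o \<Rightarrow> 'a"

definition hom :: "('o, 'a, 'e) acat_scheme \<Rightarrow> 'o \<Rightarrow> 'o \<Rightarrow> 'a set" where
  "hom C X Y = {f \<in> Ar C. src C f = X \<and> tgt C f = Y}"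

definition category :: "('o, 'a, 'e) acat_scheme \<Rightarrow> bool" where
  "category C \<longleftrightarrow>
     (\<forall>f \<in> Ar C. src C f \<in> Ob C \<and> tgt C f \<in> Ob C) \<and>
     (\<forall>X \<in> Ob C. idt C X \<in> hom C X X) \<and>
     (\<forall>X \<in> Ob C. \<forall>Y \<in> Ob C. \<forall>Z \<in> Ob C. \<forall>f \<in> hom C X Y. \<forall>g \<in> hom C Y Z.
        cmp C g f \<in> hom C X Z) \<and>
     (\<forall>W \<in> Ob C. \<forall>X \<in> Ob C. \<forall>Y \<in> Ob C. \<forall>Z \<in> Ob C.
        \<forall>f \<in> hom C W X. \<forall>g \<in> hom C X Y. \<forall>h \<in> hom C Y Z.
        cmp C h (cmp C g f) = cmp C (cmp C h g) f) \<and>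
     (\<forall>X \<in> Ob C. \<forall>Y \<in> Ob C. \<forall>f \<in> hom C X Y.
        cmp C f (idt C X) = f \<and> cmp C (idt C Y) f = f)"

definition preadditive :: "('o, 'a, 'e) acat_scheme \<Rightarrow> bool" where
  "preadditive C \<longleftrightarrow>
     (\<forall>X \<in> Ob C. \<forall>Y \<in> Ob C.
        zer C X Y \<in> hom C X Y \<and>
        (\<forall>f \<in> hom C X Y. \<forall>g \<in> hom C X Y. add C f g \<in> hom C X Y) \<and>
        (\<forall>f \<in> hom C X Y. neg C f \<in> hom C X Y) \<and>
        (\<forall>f \<in> hom C X Y. \<forall>g \<in> hom C X Y. \<forall>h \<in> hom C X Y.
           add C (add C f g) h = add C f (add C g h)) \<and>
        (\<forall>f \<in> hom C X Y. \<forall>g \<in> hom C X Y. add C f g = add C g f) \<and>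
        (\<forall>f \<in> hom C X Y. add C f (zer C X Y) = f) \<and>
        (\<forall>f \<in> hom C X Y. add C f (neg C f) = zer C X Y)) \<and>
     (\<forall>X \<in> Ob C. \<forall>Y \<in> Ob C. \<forall>Z \<in> Ob C.
        (\<forall>f \<in> hom C X Y. \<forall>g \<in> hom C Y Z. \<forall>h \<in> hom C Y Z.
           cmp C (add C g h) f = add C (cmp C g f) (cmp C h f)) \<and>
        (\<forall>f \<in> hom C X Y. \<forall>g \<in> hom C X Y. \<forall>h \<in> hom C Y Z.
           cmp C h (add C f g) = add C (cmp C h f) (cmp C h g)))"

definition has_zero_object :: "('o, 'a, 'e) acat_scheme \<Rightarrow> bool" where
  "has_zero_object C \<longleftrightarrow>
     (\<exists>Z \<in> Ob C. \<forall>X \<in> Ob C. (\<exists>!f. f \<in> hom C Z X) \<and> (\<exists>!f. f \<in> hom C X Z))"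

definition has_biproducts :: "('o, 'a, 'e) acat_scheme \<Rightarrow> bool" where
  "has_biproducts C \<longleftrightarrow>
     (\<forall>X \<in> Ob C. \<forall>Y \<in> Ob C. \<exists>P \<in> Ob C. \<exists>p1 p2 i1 i2.
        p1 \<in> hom C P X \<and> p2 \<in> hom C P Y \<and> i1 \<in> hom C X P \<and> i2 \<in> hom C Y P \<and>
        cmp C p1 i1 = idt C X \<and> cmp C p2 i2 = idt C Y \<and>
        cmp C p1 i2 = zer C Y X \<and> cmp C p2 i1 = zer C X Y \<and>
        add C (cmp C i1 p1) (cmp C i2 p2) = idt C P)"

definition mono :: "('o, 'a, 'e) acat_scheme \<Rightarrow> 'a \<Rightarrow> bool" where
  "mono C k \<longleftrightarrow> k \<in> Ar C \<and>
     (\<forall>W \<in> Ob C. \<forall>g \<in> hom C W (src C k). \<forall>h \<in> hom C W (src C k).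
        cmp C k g = cmp C k h \<longrightarrow> g = h)"

definition epi :: "('o, 'a, 'e) acat_scheme \<Rightarrow> 'a \<Rightarrow> bool" where
  "epi C c \<longleftrightarrow> c \<in> Ar C \<and>
     (\<forall>W \<in> Ob C. \<forall>g \<in> hom C (tgt C c) W. \<forall>h \<in> hom C (tgt C c) W.
        cmp C g c = cmp C h c \<longrightarrow> g = h)"

definition is_kernel :: "('o, 'a, 'e) acat_scheme \<Rightarrow> 'a \<Rightarrow> 'a \<Rightarrow> bool" where
  "is_kernel C f k \<longleftrightarrow> f \<in> Ar C \<and> k \<in> Ar C \<and> tgt C k = src C f \<and>
     cmp C f k = zer C (src C k) (tgt C f) \<and>
     (\<forall>W \<in> Ob C. \<forall>g \<in> hom C W (src C f).
        cmp C f g = zer C W (tgt C f) \<longrightarrow> (\<exists>!u. u \<in> hom C W (src C k) \<and> cmp C k u = g))"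

definition is_cokernel :: "('o, 'a, 'e) acat_scheme \<Rightarrow> 'a \<Rightarrow> 'a \<Rightarrow> bool" where
  "is_cokernel C f c \<longleftrightarrow> f \<in> Ar C \<and> c \<in> Ar C \<and> src C c = tgt C f \<and>
     cmp C c f = zer C (src C f) (tgt C c) \<and>
     (\<forall>W \<in> Ob C. \<forall>g \<in> hom C (tgt C f) W.
        cmp C g f = zer C (src C f) W \<longrightarrow> (\<exists>!u. u \<in> hom C (tgt C c) W \<and> cmp C u c = g))"

definition abelian :: "('o, 'a, 'e) acat_scheme \<Rightarrow> bool" where
  "abelian C \<longleftrightarrow> category C \<and> preadditive C \<and> has_zero_object C \<and> has_biproducts C \<and>
     (\<forall>f \<in> Ar C. \<exists>k. is_kernel C f k) \<and>
     (\<forall>f \<in> Ar C. \<exists>c. is_cokernel C f c) \<and>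
     (\<forall>k. mono C k \<longrightarrow> (\<exists>f. is_kernel C f k)) \<and>
     (\<forall>c. epi C c \<longrightarrow> (\<exists>f. is_cokernel C f c))"

definition is_section :: "('o, 'a, 'e) acat_scheme \<Rightarrow> 'a \<Rightarrow> bool" where
  "is_section C f \<longleftrightarrow> f \<in> Ar C \<and>
     (\<exists>f' \<in> hom C (tgt C f) (src C f). cmp C f' f = idt C (src C f))"

definition is_retraction :: "('o, 'a, 'e) acat_scheme \<Rightarrow> 'a \<Rightarrow> bool" where
  "is_retraction C f \<longleftrightarrow> f \<in> Ar C \<and>
     (\<exists>f' \<in> hom C (tgt C f) (src C f). cmp C f f' = idt C (tgt C f))"

definition fully_invariant :: "('o, 'a, 'e) acat_scheme \<Rightarrow> 'a \<Rightarrow> bool" where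
  "fully_invariant C k \<longleftrightarrow> mono C k \<and>
     (\<forall>h \<in> hom C (tgt C k) (tgt C k).
        \<exists>\<alpha> \<in> hom C (src C k) (src C k). cmp C h k = cmp C k \<alpha>)"

definition fully_coinvariant :: "('o, 'a, 'e) acat_scheme \<Rightarrow> 'a \<Rightarrow> bool" where
  "fully_coinvariant C c \<longleftrightarrow> epi C c \<and>
     (\<forall>h \<in> hom C (src C c) (src C c).
        \<exists>\<gamma> \<in> hom C (tgt C c) (tgt C c). cmp C c h = cmp C \<gamma> c)"

definition self_rickart :: "('o, 'a, 'e) acat_scheme \<Rightarrow> 'o \<Rightarrow> bool" where
  "self_rickart C M \<longleftrightarrow>
     (\<forall>f \<in> hom C M M. \<forall>k. is_kernel C f k \<longrightarrow> is_section C k)"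

definition dual_self_rickart :: "('o, 'a, 'e) acat_scheme \<Rightarrow> 'o \<Rightarrow> bool" where
  "dual_self_rickart C M \<longleftrightarrow>
     (\<forall>f \<in> hom C M M. \<forall>c. is_cokernel C f c \<longrightarrow> is_retraction C c)"

definition strongly_self_rickart :: "('o, 'a, 'e) acat_scheme \<Rightarrow> 'o \<Rightarrow> bool" where
  "strongly_self_rickart C M \<longleftrightarrow>
     (\<forall>f \<in> hom C M M. \<forall>k. is_kernel C f k \<longrightarrow> fully_invariant C k \<and> is_section C k)"

definition dual_strongly_self_rickart :: "('o, 'a, 'e) acat_scheme \<Rightarrow> 'o \<Rightarrow> bool" where
  "dual_strongly_self_rickart C M \<longleftrightarrow>
     (\<forall>f \<in> hom C M M. \<forall>c. is_cokernel C f c \<longrightarrow> fully_coinvariant C c \<and> is_retraction C c)"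

definition weak_duo :: "('o, 'a, 'e) acat_scheme \<Rightarrow> 'o \<Rightarrow> bool" where
  "weak_duo C M \<longleftrightarrow> (\<forall>k. is_section C k \<and> tgt C k = M \<longrightarrow> fully_invariant C k)"

end

theory Submission
  imports Defs
begin

locale pcat =
  fixes C :: "('o, 'a, 'e) acat_scheme"
  assumes cat: "category C" and pre: "preadditive C"
begin

lemma hom_Ob: "f \<in> hom C X Y \<Longrightarrow> X \<in> Ob C \<and> Y \<in> Ob C"
  using cat unfolding category_def hom_def by auto

lemma Ar_hom: "f \<in> Ar C \<Longrightarrow> f \<in> hom C (src C f) (tgt C f)"
  unfolding hom_def by auto

lemma comp_hom[intro]: "f \<in> hom C X Y \<Longrightarrow> g \<in> hom C Y Z \<Longrightarrow> cmp C g f \<in> hom C X Z"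
  using cat hom_Ob[of f X Y] hom_Ob[of g Y Z] unfolding category_def by blast

lemma assoc: "f \<in> hom C W X \<Longrightarrow> g \<in> hom C X Y \<Longrightarrow> h \<in> hom C Y Z \<Longrightarrow>
   cmp C h (cmp C g f) = cmp C (cmp C h g) f"
  using cat hom_Ob[of f W X] hom_Ob[of h Y Z] unfolding category_def by blast

lemma id_hom[intro]: "X \<in> Ob C \<Longrightarrow> idt C X \<in> hom C X X"
  using cat unfolding category_def by blast

lemma idr: "f \<in> hom C X Y \<Longrightarrow> cmp C f (idt C X) = f"
  using cat hom_Ob[of f X Y] unfolding category_def by blast

lemma idl: "f \<in> hom C X Y \<Longrightarrow> cmp C (idt C Y) f = f"
  using cat hom_Ob[of f X Y] unfolding category_def by blast

lemma zer_hom[intro]: "X \<in> Ob C \<Longrightarrow> Y \<in> Ob C \<Longrightarrow> zer C X Y \<in> hom C X Y"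
  using pre unfolding preadditive_def by blast

lemma add_hom[intro]: "f \<in> hom C X Y \<Longrightarrow> g \<in> hom C X Y \<Longrightarrow> add C f g \<in> hom C X Y"
  using pre hom_Ob[of f X Y] unfolding preadditive_def by blast

lemma neg_hom[intro]: "f \<in> hom C X Y \<Longrightarrow> neg C f \<in> hom C X Y"
  using pre hom_Ob[of f X Y] unfolding preadditive_def by blast

lemma add_assoc: "f \<in> hom C X Y \<Longrightarrow> g \<in> hom C X Y \<Longrightarrow> h \<in> hom C X Y \<Longrightarrow>
   add C (add C f g) h = add C f (add C g h)"
  using pre hom_Ob[of f X Y] unfolding preadditive_def by blast

lemma add_comm: "f \<in> hom C X Y \<Longrightarrow> g \<in> hom C X Y \<Longrightarrow> add C f g = add C g f"
  using pre hom_Ob[of f X Y] unfolding preadditive_def by blast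

lemma add_zer: "f \<in> hom C X Y \<Longrightarrow> add C f (zer C X Y) = f"
  using pre hom_Ob[of f X Y] unfolding preadditive_def by blast

lemma add_neg: "f \<in> hom C X Y \<Longrightarrow> add C f (neg C f) = zer C X Y"
  using pre hom_Ob[of f X Y] unfolding preadditive_def by blast

lemma distl: "f \<in> hom C X Y \<Longrightarrow> g \<in> hom C Y Z \<Longrightarrow> h \<in> hom C Y Z \<Longrightarrow>
   cmp C (add C g h) f = add C (cmp C g f) (cmp C h f)"
  using pre hom_Ob[of f X Y] hom_Ob[of g Y Z] unfolding preadditive_def by blast

lemma distr: "f \<in> hom C X Y \<Longrightarrow> g \<in> hom C X Y \<Longrightarrow> h \<in> hom C Y Z \<Longrightarrow>
   cmp C h (add C f g) = add C (cmp C h f) (cmp C h g)"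
proof -
  assume a: "f \<in> hom C X Y" "g \<in> hom C X Y" "h \<in> hom C Y Z"
  have "\<forall>X \<in> Ob C. \<forall>Y \<in> Ob C. \<forall>Z \<in> Ob C.
        (\<forall>f \<in> hom C X Y. \<forall>g \<in> hom C X Y. \<forall>h \<in> hom C Y Z.
           cmp C h (add C f g) = add C (cmp C h f) (cmp C h g))"
    using pre unfolding preadditive_def by (simp add: ball_conj_distrib)
  then show ?thesis using a hom_Ob[OF a(1)] hom_Ob[OF a(3)] by blast
qed

lemma zer_add: "f \<in> hom C X Y \<Longrightarrow> add C (zer C X Y) f = f"
  using add_comm add_zer hom_Ob zer_hom by metis

lemma neg_unique:
  assumes x: "x \<in> hom C X Y" and y: "y \<in> hom C X Y" and e: "add C x y = zer C X Y"
  shows "y = neg C x"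
proof -
  have "y = add C y (add C x (neg C x))" using add_zer[OF y] add_neg[OF x] by simp
  also have "\<dots> = add C (add C x y) (neg C x)"
    using add_assoc[OF y x neg_hom[OF x]] add_comm[OF x y] by simp
  also have "\<dots> = neg C x" using e zer_add[OF neg_hom[OF x]] by simp
  finally show ?thesis .
qed

lemma neg_neg: "y \<in> hom C X Y \<Longrightarrow> neg C (neg C y) = y"
  using neg_unique[of "neg C y" X Y y] add_comm add_neg neg_hom by metis

lemma sub_eq:
  assumes x: "x \<in> hom C X Y" and y: "y \<in> hom C X Y" and e: "add C x (neg C y) = zer C X Y"
  shows "x = y"
proof -
  have "add C (neg C y) x = zer C X Y" using e add_comm[OF x neg_hom[OF y]] by simp
  then have "x = neg C (neg C y)" using neg_unique[OF neg_hom[OF y] x] by simp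
  then show ?thesis using neg_neg[OF y] by simp
qed

lemma self_add:
  assumes a: "a \<in> hom C X Y" and e: "add C a a = a"
  shows "a = zer C X Y"
proof -
  have "a = add C a (add C a (neg C a))" using add_zer[OF a] add_neg[OF a] by simp
  also have "\<dots> = add C (add C a a) (neg C a)" using add_assoc[OF a a neg_hom[OF a]] by simp
  also have "\<dots> = zer C X Y" using e add_neg[OF a] by simp
  finally show ?thesis .
qed

lemma neg_zer: "X \<in> Ob C \<Longrightarrow> Y \<in> Ob C \<Longrightarrow> neg C (zer C X Y) = zer C X Y"
  using neg_unique[of "zer C X Y" X Y "zer C X Y"] add_zer zer_hom by metis

lemma cmp_zer_left:
  assumes f: "f \<in> hom C X Y" and Z: "Z \<in> Ob C"
  shows "cmp C (zer C Y Z) f = zer C X Z"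
proof -
  have Y: "Y \<in> Ob C" using hom_Ob[OF f] by simp
  have z: "zer C Y Z \<in> hom C Y Z" using Y Z by blast
  have "add C (cmp C (zer C Y Z) f) (cmp C (zer C Y Z) f) = cmp C (zer C Y Z) f"
    using distl[OF f z z] add_zer[OF z] by simp
  then show ?thesis using self_add comp_hom[OF f z] by blast
qed

lemma cmp_zer_right:
  assumes f: "f \<in> hom C Y Z" and X: "X \<in> Ob C"
  shows "cmp C f (zer C X Y) = zer C X Z"
proof -
  have Y: "Y \<in> Ob C" using hom_Ob[OF f] by simp
  have z: "zer C X Y \<in> hom C X Y" using Y X by blast
  have "add C (cmp C f (zer C X Y)) (cmp C f (zer C X Y)) = cmp C f (zer C X Y)"
    using distr[OF z z f] add_zer[OF z] by simp
  then show ?thesis using self_add comp_hom[OF z f] by blast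
qed

lemma neg_cmp_left:
  assumes f: "f \<in> hom C X Y" and g: "g \<in> hom C Y Z"
  shows "cmp C (neg C g) f = neg C (cmp C g f)"
proof -
  have "add C (cmp C g f) (cmp C (neg C g) f) = zer C X Z"
    using distl[OF f g neg_hom[OF g], symmetric] add_neg[OF g] cmp_zer_left[OF f] hom_Ob[OF g]
    by simp
  then show ?thesis using neg_unique comp_hom f g neg_hom by metis
qed

lemma neg_cmp_right:
  assumes f: "f \<in> hom C X Y" and g: "g \<in> hom C Y Z"
  shows "cmp C g (neg C f) = neg C (cmp C g f)"
proof -
  have "add C (cmp C g f) (cmp C g (neg C f)) = zer C X Z"
    using distr[OF f neg_hom[OF f] g, symmetric] add_neg[OF f] cmp_zer_right[OF g] hom_Ob[OF f]
    by simp
  then show ?thesis using neg_unique comp_hom f g neg_hom by metis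
qed

lemma sub_cmp_left:
  assumes M: "M \<in> Ob C" and p: "p \<in> hom C M M" and g: "g \<in> hom C W M"
  shows "cmp C (add C (idt C M) (neg C p)) g = add C g (neg C (cmp C p g))"
  using distl[OF g id_hom[OF M] neg_hom[OF p]] idl[OF g] neg_cmp_left[OF g p] by simp

lemma sub_cmp_right:
  assumes M: "M \<in> Ob C" and p: "p \<in> hom C M M" and g: "g \<in> hom C M W"
  shows "cmp C g (add C (idt C M) (neg C p)) = add C g (neg C (cmp C g p))"
  using distr[OF id_hom[OF M] neg_hom[OF p] g] idr[OF g] neg_cmp_right[OF p g] by simp


lemma section_mono:
  assumes "is_section C k"
  shows "mono C k"
proof -
  obtain k' where k': "k' \<in> hom C (tgt C k) (src C k)" "cmp C k' k = idt C (src C k)"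
    using assms unfolding is_section_def by blast
  have k: "k \<in> hom C (src C k) (tgt C k)" using assms Ar_hom unfolding is_section_def by blast
  show ?thesis unfolding mono_def
  proof (intro conjI ballI impI)
    show "k \<in> Ar C" using assms unfolding is_section_def by blast
    fix W g h assume g: "g \<in> hom C W (src C k)" and h: "h \<in> hom C W (src C k)"
      and e: "cmp C k g = cmp C k h"
    have "g = cmp C (cmp C k' k) g" using idl[OF g] k' by simp
    also have "\<dots> = cmp C k' (cmp C k g)" using assoc[OF g k k'(1)] by simp
    also have "\<dots> = cmp C k' (cmp C k h)" using e by simp
    also have "\<dots> = cmp C (cmp C k' k) h" using assoc[OF h k k'(1)] by simp
    also have "\<dots> = h" using idl[OF h] k' by simp
    finally show "g = h" .
  qed
qed

lemma part1:
  assumes M: "M \<in> Ob C"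
    and H: "\<forall>f \<in> hom C M M. \<forall>j. is_kernel C f j \<longrightarrow> fully_invariant C j"
    and kex: "\<forall>f \<in> Ar C. \<exists>k. is_kernel C f k"
    and sec: "is_section C k" and tk: "tgt C k = M"
  shows "fully_invariant C k"
proof -
  define K where "K = src C k"
  obtain k' where k': "k' \<in> hom C M K" "cmp C k' k = idt C K"
    using sec tk unfolding is_section_def K_def by blast
  have k: "k \<in> hom C K M" using sec Ar_hom tk unfolding is_section_def K_def by blast
  have KO: "K \<in> Ob C" using hom_Ob[OF k] by simp
  define p where "p = cmp C k k'"
  have p: "p \<in> hom C M M" unfolding p_def using k k' by blast
  define s where "s = add C (idt C M) (neg C p)"
  have s: "s \<in> hom C M M" unfolding s_def using p M by blast
  obtain j where j: "is_kernel C s j" using kex s unfolding hom_def by blast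
  define J where "J = src C j"
  have jh: "j \<in> hom C J M" using j s unfolding is_kernel_def hom_def J_def by auto
  have JO: "J \<in> Ob C" using hom_Ob[OF jh] by simp
  have fij: "fully_invariant C j" using H s j by blast
  have pk: "cmp C p k = k" unfolding p_def using assoc[OF k k'(1) k] k' idr[OF k] by simp
  have sk: "cmp C s k = zer C K M"
    unfolding s_def using sub_cmp_left[OF M p k] pk add_neg[OF k] by simp
  have srcs: "src C s = M" "tgt C s = M" using s unfolding hom_def by auto
  obtain u where u: "u \<in> hom C K J" "cmp C j u = k"
    using j KO k sk srcs unfolding is_kernel_def J_def by metis
  have sj: "cmp C s j = zer C J M" using j srcs unfolding is_kernel_def J_def by simp
  have "add C j (neg C (cmp C p j)) = zer C J M"
    using sj sub_cmp_left[OF M p jh] unfolding s_def by simp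
  then have jpj: "j = cmp C p j" using sub_eq jh comp_hom[OF jh p] by blast
  show ?thesis unfolding fully_invariant_def
  proof (intro conjI ballI)
    show "mono C k" using section_mono[OF sec] .
    fix h assume h0: "h \<in> hom C (tgt C k) (tgt C k)"
    have h: "h \<in> hom C M M" using h0 tk by simp
    obtain \<beta> where b: "\<beta> \<in> hom C J J" "cmp C h j = cmp C j \<beta>"
      using fij h jh unfolding fully_invariant_def hom_def by auto
    have k'j: "cmp C k' j \<in> hom C J K" using jh k' by blast
    have bu: "cmp C \<beta> u \<in> hom C K J" using b u by blast
    have "cmp C h k = cmp C h (cmp C j u)" using u by simp
    also have "\<dots> = cmp C (cmp C h j) u" using assoc[OF u(1) jh h] .
    also have "\<dots> = cmp C j (cmp C \<beta> u)" using b assoc[OF u(1) b(1) jh] by simp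
    also have "\<dots> = cmp C (cmp C k (cmp C k' j)) (cmp C \<beta> u)"
      using jpj assoc[OF jh k'(1) k] unfolding p_def by simp
    also have "\<dots> = cmp C k (cmp C (cmp C k' j) (cmp C \<beta> u))"
      using assoc[OF bu k'j k] by simp
    finally have e: "cmp C h k = cmp C k (cmp C (cmp C k' j) (cmp C \<beta> u))" .
    have "cmp C (cmp C k' j) (cmp C \<beta> u) \<in> hom C (src C k) (src C k)"
      using k'j bu unfolding K_def by blast
    then show "\<exists>\<alpha>\<in>hom C (src C k) (src C k). cmp C h k = cmp C k \<alpha>" using e by blast
  qed
qed


lemma part2:
  assumes M: "M \<in> Ob C"
    and H: "\<forall>f \<in> hom C M M. \<forall>c. is_cokernel C f c \<longrightarrow> fully_coinvariant C c"
    and cex: "\<forall>f \<in> Ar C. \<exists>c. is_cokernel C f c"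
    and sec: "is_section C k" and tk: "tgt C k = M"
  shows "fully_invariant C k"
proof -
  define K where "K = src C k"
  obtain k' where k': "k' \<in> hom C M K" "cmp C k' k = idt C K"
    using sec tk unfolding is_section_def K_def by blast
  have k: "k \<in> hom C K M" using sec Ar_hom tk unfolding is_section_def K_def by blast
  have KO: "K \<in> Ob C" using hom_Ob[OF k] by simp
  define p where "p = cmp C k k'"
  have p: "p \<in> hom C M M" unfolding p_def using k k' by blast
  define s where "s = add C (idt C M) (neg C p)"
  have s: "s \<in> hom C M M" unfolding s_def using p M by blast
  obtain c where c: "is_cokernel C p c" using cex p unfolding hom_def by blast
  define Q where "Q = tgt C c"
  have srcp: "src C p = M" "tgt C p = M" using p unfolding hom_def by auto
  have ch: "c \<in> hom C M Q" using c srcp unfolding is_cokernel_def hom_def Q_def by auto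
  have QO: "Q \<in> Ob C" using hom_Ob[OF ch] by simp
  have fic: "fully_coinvariant C c" using H p c by blast
  have cp: "cmp C c p = zer C M Q" using c srcp unfolding is_cokernel_def Q_def by simp
  have pp: "cmp C p p = p"
  proof -
    have "cmp C p p = cmp C k (cmp C k' (cmp C k k'))" unfolding p_def
      using assoc[OF comp_hom[OF k'(1) k] k'(1) k] by simp
    also have "\<dots> = cmp C k (cmp C (cmp C k' k) k')" using assoc[OF k'(1) k k'(1)] by simp
    also have "\<dots> = p" using k' idl[OF k'(1)] unfolding p_def by simp
    finally show ?thesis .
  qed
  have sp: "cmp C s p = zer C M M"
    unfolding s_def using sub_cmp_left[OF M p p] pp add_neg[OF p] by simp
  obtain u where u: "u \<in> hom C Q M" "cmp C u c = s"
    using c M s sp srcp unfolding is_cokernel_def Q_def by metis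
  have ck: "cmp C c k = zer C K Q"
  proof -
    have "cmp C c k = cmp C c (cmp C p k)" unfolding p_def
      using assoc[OF k k'(1) k] k' idr[OF k] by simp
    also have "\<dots> = cmp C (cmp C c p) k" using assoc[OF k p ch] .
    also have "\<dots> = zer C K Q" using cp cmp_zer_left[OF k QO] by simp
    finally show ?thesis .
  qed
  show ?thesis unfolding fully_invariant_def
  proof (intro conjI ballI)
    show "mono C k" using section_mono[OF sec] .
    fix h assume h0: "h \<in> hom C (tgt C k) (tgt C k)"
    have h: "h \<in> hom C M M" using h0 tk by simp
    obtain \<gamma> where g: "\<gamma> \<in> hom C Q Q" "cmp C c h = cmp C \<gamma> c"
      using fic h ch unfolding fully_coinvariant_def hom_def by auto
    have hk: "cmp C h k \<in> hom C K M" using h k by blast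
    have "cmp C s (cmp C h k) = cmp C u (cmp C c (cmp C h k))"
      using u assoc[OF hk ch u(1)] by simp
    also have "\<dots> = cmp C u (cmp C (cmp C \<gamma> c) k)" using assoc[OF k h ch] g by simp
    also have "\<dots> = cmp C u (cmp C \<gamma> (zer C K Q))" using assoc[OF k ch g(1)] ck by simp
    also have "\<dots> = zer C K M" using cmp_zer_right[OF g(1) KO] cmp_zer_right[OF u(1) KO] by simp
    finally have "cmp C s (cmp C h k) = zer C K M" .
    then have "add C (cmp C h k) (neg C (cmp C p (cmp C h k))) = zer C K M"
      using sub_cmp_left[OF M p hk] unfolding s_def by simp
    then have "cmp C h k = cmp C p (cmp C h k)" using sub_eq hk comp_hom[OF hk p] by blast
    also have "\<dots> = cmp C k (cmp C k' (cmp C h k))" unfolding p_def using assoc[OF hk k'(1) k] by simp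
    finally have e: "cmp C h k = cmp C k (cmp C k' (cmp C h k))" .
    have "cmp C k' (cmp C h k) \<in> hom C (src C k) (src C k)" using hk k' unfolding K_def by blast
    then show "\<exists>\<alpha>\<in>hom C (src C k) (src C k). cmp C h k = cmp C k \<alpha>" using e by blast
  qed
qed

lemma part3:
  assumes kex: "\<forall>f \<in> Ar C. \<exists>k. is_kernel C f k"
    and wd: "weak_duo C M" and f: "f \<in> hom C M M"
    and cc: "is_cokernel C f c" and ret: "is_retraction C c"
  shows "fully_coinvariant C c"
proof -
  define Q where "Q = tgt C c"
  have srcc: "src C c = M" using cc f unfolding is_cokernel_def hom_def by auto
  have ch: "c \<in> hom C M Q" using cc srcc unfolding is_cokernel_def hom_def Q_def by auto
  have M: "M \<in> Ob C" and QO: "Q \<in> Ob C" using hom_Ob[OF ch] by auto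
  obtain c' where c': "c' \<in> hom C Q M" "cmp C c c' = idt C Q"
    using ret srcc unfolding is_retraction_def Q_def by blast
  define q where "q = cmp C c' c"
  have q: "q \<in> hom C M M" unfolding q_def using c' ch by blast
  define s where "s = add C (idt C M) (neg C q)"
  have s: "s \<in> hom C M M" unfolding s_def using q M by blast
  obtain k where kk: "is_kernel C c k" using kex ch unfolding hom_def by blast
  define K where "K = src C k"
  have k: "k \<in> hom C K M" using kk srcc unfolding is_kernel_def hom_def K_def by auto
  have KO: "K \<in> Ob C" using hom_Ob[OF k] by simp
  have ck: "cmp C c k = zer C K Q" using kk unfolding is_kernel_def K_def Q_def by simp
  have cq: "cmp C c q = c" unfolding q_def using assoc[OF ch c'(1) ch] c' idl[OF ch] by simp
  have cs: "cmp C c s = zer C M Q"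
    unfolding s_def using sub_cmp_right[OF M q ch] cq add_neg[OF ch] by simp
  have U: "\<forall>W\<in>Ob C. \<forall>g\<in>hom C W (src C c). cmp C c g = zer C W (tgt C c) \<longrightarrow>
      (\<exists>!u. u \<in> hom C W (src C k) \<and> cmp C k u = g)"
    using kk unfolding is_kernel_def by blast
  have s': "s \<in> hom C M (src C c)" using s srcc by simp
  have cs': "cmp C c s = zer C M (tgt C c)" using cs unfolding Q_def .
  obtain k' where k': "k' \<in> hom C M K" "cmp C k k' = s"
    using U[rule_format, OF M s' cs'] unfolding K_def by blast
  have qk: "cmp C q k = zer C K M" unfolding q_def
    using assoc[OF k ch c'(1)] ck cmp_zer_right[OF c'(1) KO] by simp
  have sk: "cmp C s k = k"
    unfolding s_def using sub_cmp_left[OF M q k] qk neg_zer[OF KO M] add_zer[OF k] by simp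
  have k'k: "cmp C k' k \<in> hom C K K" using k k' by blast
  have e1: "cmp C k (cmp C k' k) = k" using assoc[OF k k'(1) k] k' sk by simp
  have e2: "cmp C k (idt C K) = k" using idr[OF k] .
  have k2: "k \<in> hom C K (src C c)" using k srcc by simp
  have ck': "cmp C c k = zer C K (tgt C c)" using ck unfolding Q_def .
  have uniq: "\<exists>!u. u \<in> hom C K K \<and> cmp C k u = k"
    using U[rule_format, OF KO k2 ck'] unfolding K_def .
  have "cmp C k' k = idt C K" using uniq e1 e2 k'k id_hom[OF KO] by blast
  then have sec: "is_section C k" using k k' unfolding is_section_def hom_def K_def by auto
  have tk: "tgt C k = M" using k unfolding hom_def by simp
  have fik: "fully_invariant C k" using wd sec tk unfolding weak_duo_def by blast
  show ?thesis unfolding fully_coinvariant_def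
  proof (intro conjI ballI)
    show "epi C c" unfolding epi_def
    proof (intro conjI ballI impI)
      show "c \<in> Ar C" using ch unfolding hom_def by simp
      fix W g h assume g0: "g \<in> hom C (tgt C c) W" and h0: "h \<in> hom C (tgt C c) W"
        and e: "cmp C g c = cmp C h c"
      have g: "g \<in> hom C Q W" and h: "h \<in> hom C Q W" using g0 h0 unfolding Q_def by auto
      have "g = cmp C g (cmp C c c')" using idr[OF g] c' by simp
      also have "\<dots> = cmp C (cmp C h c) c'" using assoc[OF c'(1) ch g] e by simp
      also have "\<dots> = h" using assoc[OF c'(1) ch h] c' idr[OF h] by simp
      finally show "g = h" .
    qed
    fix h assume h0: "h \<in> hom C (src C c) (src C c)"
    have h: "h \<in> hom C M M" using h0 srcc by simp
    obtain \<alpha> where a: "\<alpha> \<in> hom C K K" "cmp C h k = cmp C k \<alpha>"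
      using fik h k unfolding fully_invariant_def hom_def K_def by auto
    have chh: "cmp C c h \<in> hom C M Q" using h ch by blast
    have "cmp C (cmp C c h) s = cmp C (cmp C c h) (cmp C k k')" using k' by simp
    also have "\<dots> = cmp C (cmp C c (cmp C h k)) k'" using assoc[OF k'(1) k chh] assoc[OF k h ch] by simp
    also have "\<dots> = cmp C (cmp C (cmp C c k) \<alpha>) k'" using a assoc[OF a(1) k ch] by simp
    also have "\<dots> = zer C M Q" using ck cmp_zer_left[OF a(1) QO] cmp_zer_left[OF k'(1) QO] by simp
    finally have "cmp C (cmp C c h) s = zer C M Q" .
    then have "add C (cmp C c h) (neg C (cmp C (cmp C c h) q)) = zer C M Q"
      using sub_cmp_right[OF M q chh] unfolding s_def by simp
    then have "cmp C c h = cmp C (cmp C c h) q" using sub_eq chh comp_hom[OF q chh] by blast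
    also have "\<dots> = cmp C (cmp C (cmp C c h) c') c" unfolding q_def using assoc[OF ch c'(1) chh] .
    finally have e: "cmp C c h = cmp C (cmp C (cmp C c h) c') c" .
    have "cmp C (cmp C c h) c' \<in> hom C (tgt C c) (tgt C c)" using chh c' unfolding Q_def by blast
    then show "\<exists>\<gamma>\<in>hom C (tgt C c) (tgt C c). cmp C c h = cmp C \<gamma> c" using e by blast
  qed
qed
end

theorem corollary2p10:
  fixes C :: "('o, 'a, 'e) acat_scheme" and M :: 'o
  assumes "abelian C" and "M \<in> Ob C"
  shows "(strongly_self_rickart C M \<longleftrightarrow> self_rickart C M \<and> weak_duo C M) \<and>
         (dual_strongly_self_rickart C M \<longleftrightarrow> dual_self_rickart C M \<and> weak_duo C M)"
proof -
  have ab: "category C" "preadditive C" using assms(1) unfolding abelian_def by auto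
  interpret pcat C using ab by unfold_locales
  have kex: "\<forall>f \<in> Ar C. \<exists>k. is_kernel C f k" and cex: "\<forall>f \<in> Ar C. \<exists>c. is_cokernel C f c"
    using assms(1) unfolding abelian_def by auto
  have P1: "strongly_self_rickart C M \<longleftrightarrow> self_rickart C M \<and> weak_duo C M"
  proof
    assume S: "strongly_self_rickart C M"
    have "weak_duo C M" unfolding weak_duo_def
      using part1[OF assms(2) _ kex] S unfolding strongly_self_rickart_def by blast
    then show "self_rickart C M \<and> weak_duo C M"
      using S unfolding strongly_self_rickart_def self_rickart_def by blast
  next
    assume S: "self_rickart C M \<and> weak_duo C M"
    show "strongly_self_rickart C M" unfolding strongly_self_rickart_def
    proof (intro ballI allI impI)
      fix f k assume f: "f \<in> hom C M M" and k: "is_kernel C f k"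
      have "is_section C k" using S f k unfolding self_rickart_def by blast
      moreover have "tgt C k = M" using k f unfolding is_kernel_def hom_def by auto
      ultimately show "fully_invariant C k \<and> is_section C k"
        using S unfolding weak_duo_def by blast
    qed
  qed
  have P2: "dual_strongly_self_rickart C M \<longleftrightarrow> dual_self_rickart C M \<and> weak_duo C M"
  proof
    assume S: "dual_strongly_self_rickart C M"
    have "weak_duo C M" unfolding weak_duo_def
      using part2[OF assms(2) _ cex] S unfolding dual_strongly_self_rickart_def by blast
    then show "dual_self_rickart C M \<and> weak_duo C M"
      using S unfolding dual_strongly_self_rickart_def dual_self_rickart_def by blast
  next
    assume S: "dual_self_rickart C M \<and> weak_duo C M"
    show "dual_strongly_self_rickart C M" unfolding dual_strongly_self_rickart_def
    proof (intro ballI allI impI)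
      fix f c assume f: "f \<in> hom C M M" and c: "is_cokernel C f c"
      have "is_retraction C c" using S f c unfolding dual_self_rickart_def by blast
      then show "fully_coinvariant C c \<and> is_retraction C c"
        using part3[OF kex _ f c] S by blast
    qed
  qed
  show ?thesis using P1 P2 by blast
qed

end
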